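(* For every $n\ge 3$, the polynomial $P_n(t)$ is $\gamma$-positive: writing $P_n(t)=\sum_{i=0}^{\lfloor (n-3)/2\rfloor}\gamma_i\,t^i(1+t)^{n-3-2i}$ (which is possible since $P_n$ is symmetric of degree $n-3$), all $\gamma_i$ are nonnegative integers.
   Context: For $n\ge3$, $P_n(t)\in\mathbb Z[t]$ is the polynomial with $[\overline{\mathcal M}_{0,n}]=P_n(\mathbb L)$ in the Grothendieck ring of varieties, $\mathbb L=[\mathbb A^1]$; equivalently, $P_3(t)=1$ and for $n>3$, $P_n(t)=P_{n-1}(t)(1+t)+t\sum_{i=3}^{n-2}\binom{n-2}{i-1}P_i(t)P_{n+1-i}(t)$. $P_n$ has degree $n-3$ and is palindromic. A polynomial $f(t)=\sum a_it^i$ is symmetric with center $d/2$ if $a_{d-i}=a_i$ for all $i$; such $f\in\mathbb Z[t]$ can be uniquely written $f(t)=\sum_{i=0}^{\lfloor d/2\rfloor}\gamma_i t^i(1+t)^{d-2i}$ with $\gamma_i\in\mathbb Z$, and $f$ is called $\gamma$-positive if all $\gamma_i\ge0$. *)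

theory Defs
  imports "HOL-Computational_Algebra.Polynomial"
begin

text \<open>The polynomials P_n (n >= 3) with [M_0,n-bar] = P_n(L).  P_3 = 1 and for n > 3
  P_n = P_{n-1}(1+t) + t * sum_{i=3}^{n-2} binom(n-2,i-1) P_i P_{n+1-i}.
  Values for n < 3 are irrelevant (set to 1).\<close>

function Pn :: "nat \<Rightarrow> int poly" where
  "Pn n = (if n \<le> 3 then 1 else
     Pn (n - 1) * [:1, 1:] +
     [:0, 1:] * (\<Sum>i\<in>{3..n-2}. of_nat ((n - 2) choose (i - 1)) * Pn i * Pn (n + 1 - i)))"
  by auto
termination
  by (relation "measure id") auto

definition gamma_positive :: "nat \<Rightarrow> int poly \<Rightarrow> bool" where
  "gamma_positive d f \<longleftrightarrow>
     (\<exists>\<gamma> :: nat \<Rightarrow> int. (\<forall>i \<le> d div 2. \<gamma> i \<ge> 0) \<and>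
        f = (\<Sum>i\<le>d div 2. smult (\<gamma> i) ([:0, 1:] ^ i * [:1, 1:] ^ (d - 2 * i))))"

end

theory Submission
  imports Defs
begin

declare Pn.simps[simp del]

abbreviation "PX \<equiv> ([:0, 1:] :: int poly)"
abbreviation "PY \<equiv> ([:1, 1:] :: int poly)"

lemma smult_sum_right: "smult c (sum f S) = (\<Sum>i\<in>S. smult c (f i))"
  by (induction S rule: infinite_finite_induct) (auto simp: smult_add_right)

lemma gp_zero: "gamma_positive d 0"
  unfolding gamma_positive_def by (rule exI[of _ "\<lambda>_. 0"]) simp

lemma gp_add: "gamma_positive d f \<Longrightarrow> gamma_positive d g \<Longrightarrow> gamma_positive d (f + g)"
  unfolding gamma_positive_def
proof (elim exE conjE)
  fix a b assume a: "\<forall>i\<le>d div 2. 0 \<le> a i" and b: "\<forall>i\<le>d div 2. 0 \<le> b i"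
    and f: "f = (\<Sum>i\<le>d div 2. smult (a i) (PX ^ i * PY ^ (d - 2 * i)))"
    and g: "g = (\<Sum>i\<le>d div 2. smult (b i) (PX ^ i * PY ^ (d - 2 * i)))"
  show "\<exists>\<gamma>. (\<forall>i\<le>d div 2. 0 \<le> \<gamma> i) \<and> f + g = (\<Sum>i\<le>d div 2. smult (\<gamma> i) (PX ^ i * PY ^ (d - 2 * i)))"
    by (rule exI[of _ "\<lambda>i. a i + b i"]) (simp add: a b f g sum.distrib smult_add_left)
qed

lemma gp_smult: "c \<ge> 0 \<Longrightarrow> gamma_positive d f \<Longrightarrow> gamma_positive d (smult c f)"
  unfolding gamma_positive_def
proof (elim exE conjE)
  fix a assume c: "c \<ge> 0" and a: "\<forall>i\<le>d div 2. 0 \<le> a i"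
    and f: "f = (\<Sum>i\<le>d div 2. smult (a i) (PX ^ i * PY ^ (d - 2 * i)))"
  show "\<exists>\<gamma>. (\<forall>i\<le>d div 2. 0 \<le> \<gamma> i) \<and> smult c f = (\<Sum>i\<le>d div 2. smult (\<gamma> i) (PX ^ i * PY ^ (d - 2 * i)))"
    by (rule exI[of _ "\<lambda>i. c * a i"]) (simp add: a c f smult_sum_right)
qed

lemma gp_sum: "finite S \<Longrightarrow> (\<And>s. s \<in> S \<Longrightarrow> gamma_positive d (f s)) \<Longrightarrow> gamma_positive d (sum f S)"
  by (induction S rule: finite_induct) (auto intro: gp_zero gp_add)

lemma gp_basis: assumes "2 * k \<le> d" shows "gamma_positive d (PX ^ k * PY ^ (d - 2 * k))"
  unfolding gamma_positive_def
proof (rule exI[of _ "\<lambda>i. if i = k then 1 else 0"], intro conjI)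
  have k: "k \<le> d div 2" using assms by linarith
  have "(\<Sum>i\<le>d div 2. smult (if i = k then 1 else 0) (PX ^ i * PY ^ (d - 2 * i)))
     = (\<Sum>i\<le>d div 2. if i = k then PX ^ i * PY ^ (d - 2 * i) else 0)"
    by (rule sum.cong) auto
  also have "\<dots> = PX ^ k * PY ^ (d - 2 * k)" using k by (simp add: sum.delta)
  finally show "PX ^ k * PY ^ (d - 2 * k) = (\<Sum>i\<le>d div 2. smult (if i = k then 1 else 0) (PX ^ i * PY ^ (d - 2 * i)))" by simp
qed auto

lemma gp_mult_gen:
  assumes "gamma_positive d f"
    and "\<And>i. i \<le> d div 2 \<Longrightarrow> gamma_positive d' (PX ^ i * PY ^ (d - 2 * i) * h)"
  shows "gamma_positive d' (f * h)"
proof -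
  obtain a where a: "\<forall>i\<le>d div 2. 0 \<le> a i"
    and f: "f = (\<Sum>i\<le>d div 2. smult (a i) (PX ^ i * PY ^ (d - 2 * i)))"
    using assms(1) unfolding gamma_positive_def by blast
  have "f * h = (\<Sum>i\<le>d div 2. smult (a i) (PX ^ i * PY ^ (d - 2 * i) * h))"
    by (simp add: f sum_distrib_right)
  also have "gamma_positive d' \<dots>"
    by (rule gp_sum) (auto intro!: gp_smult a[rule_format] assms(2))
  finally show ?thesis .
qed

lemma basis_mult:
  assumes "2 * i \<le> d1" "2 * j \<le> d2"
  shows "PX ^ i * PY ^ (d1 - 2 * i) * (PX ^ j * PY ^ (d2 - 2 * j)) = PX ^ (i + j) * PY ^ (d1 + d2 - 2 * (i + j))"
proof -
  have "d1 + d2 - 2 * (i + j) = (d1 - 2 * i) + (d2 - 2 * j)" using assms by simp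
  then show ?thesis by (simp add: power_add algebra_simps)
qed

lemma gp_mult:
  assumes "gamma_positive d1 f" "gamma_positive d2 g"
  shows "gamma_positive (d1 + d2) (f * g)"
proof (rule gp_mult_gen[OF assms(1)])
  fix i assume i: "i \<le> d1 div 2"
  have "g * (PX ^ i * PY ^ (d1 - 2 * i)) = PX ^ i * PY ^ (d1 - 2 * i) * g" by simp
  moreover have "gamma_positive (d1 + d2) (g * (PX ^ i * PY ^ (d1 - 2 * i)))"
  proof (rule gp_mult_gen[OF assms(2)])
    fix j assume j: "j \<le> d2 div 2"
    have "PX ^ j * PY ^ (d2 - 2 * j) * (PX ^ i * PY ^ (d1 - 2 * i)) =
      PX ^ (i + j) * PY ^ (d1 + d2 - 2 * (i + j))"
      using basis_mult[of i d1 j d2] i j by (simp add: mult.commute)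
    moreover have "gamma_positive (d1 + d2) (PX ^ (i + j) * PY ^ (d1 + d2 - 2 * (i + j)))"
      proof (intro gp_basis)
      have "2 * i \<le> d1" "2 * j \<le> d2" using i j by linarith+
      then show "2 * (i + j) \<le> d1 + d2" by simp
    qed
    ultimately show "gamma_positive (d1 + d2) (PX ^ j * PY ^ (d2 - 2 * j) * (PX ^ i * PY ^ (d1 - 2 * i)))"
      by simp
  qed
  ultimately show "gamma_positive (d1 + d2) (PX ^ i * PY ^ (d1 - 2 * i) * g)" by (simp add: mult.commute)
qed

lemma gp_Y: "gamma_positive 1 PY"
  using gp_basis[of 0 1] by simp

lemma gp_X: "gamma_positive 2 PX"
  using gp_basis[of 1 2] by simp

lemma gp_one: "gamma_positive 0 1"
  using gp_basis[of 0 0] by simp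

lemma gp_const: "c \<ge> 0 \<Longrightarrow> gamma_positive 0 [:c:]"
  using gp_smult[OF _ gp_one, of c] by simp

theorem theorem1p3:
  fixes n :: nat
  assumes "n \<ge> 3"
  shows "gamma_positive (n - 3) (Pn n)"
  using assms
proof (induction n rule: less_induct)
  case (less n)
  show ?case
  proof (cases "n = 3")
    case True
    then show ?thesis by (simp add: gp_one Pn.simps)
  next
    case False
    with less.prems have n4: "n \<ge> 4" by simp
    have eq: "Pn n = Pn (n - 1) * PY +
     PX * (\<Sum>i\<in>{3..n-2}. of_nat ((n - 2) choose (i - 1)) * Pn i * Pn (n + 1 - i))"
      using n4 by (subst Pn.simps) simp
    have A0: "gamma_positive (n - 1 - 3 + 1) (Pn (n - 1) * PY)"
      using gp_mult[OF less.IH[of "n - 1"] gp_Y] n4 by simp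
    have "n - 1 - 3 + 1 = n - 3" using n4 by simp
    with A0 have A: "gamma_positive (n - 3) (Pn (n - 1) * PY)" by simp
    have B: "gamma_positive (n - 3)
       (PX * (\<Sum>i\<in>{3..n-2}. of_nat ((n - 2) choose (i - 1)) * Pn i * Pn (n + 1 - i)))"
    proof (cases "n \<ge> 5")
      case False
      then have "n = 4" using n4 by simp
      then show ?thesis by (simp add: gp_zero)
    next
      case True
      have S: "gamma_positive (n - 5)
        (\<Sum>i\<in>{3..n-2}. of_nat ((n - 2) choose (i - 1)) * Pn i * Pn (n + 1 - i))"
      proof (rule gp_sum)
        fix i assume i: "i \<in> {3..n-2}"
        have c: "(of_nat ((n - 2) choose (i - 1)) :: int poly) = [:of_nat ((n - 2) choose (i - 1)):]"
          by (simp add: of_nat_poly)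
        have "gamma_positive (0 + (i - 3) + (n + 1 - i - 3))
           (of_nat ((n - 2) choose (i - 1)) * Pn i * Pn (n + 1 - i))"
          unfolding c using i
          by (intro gp_mult gp_const less.IH) auto
        moreover have "0 + (i - 3) + (n + 1 - i - 3) = n - 5" using i True by auto
        ultimately show "gamma_positive (n - 5)
           (of_nat ((n - 2) choose (i - 1)) * Pn i * Pn (n + 1 - i))" by simp
      qed simp
      have "gamma_positive (2 + (n - 5)) (PX * (\<Sum>i\<in>{3..n-2}. of_nat ((n - 2) choose (i - 1)) * Pn i * Pn (n + 1 - i)))"
        by (rule gp_mult[OF gp_X S])
      moreover have "2 + (n - 5) = n - 3" using True by simp
      ultimately show ?thesis by simp
    qed
    show ?thesis unfolding eq by (rule gp_add[OF A B])
  qed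
qed

end
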